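(* For integers $M,N,m,l,r$ with $1\leq m\leq l<N$, $M-m\geq N-l\geq 1$ and $0\leq r\leq M-N+2l-2m+2$, the polynomial \[ {M\brack m}{N\brack l}-q^{r}{M\brack m-1}{N\brack l+1} \] has nonnegative coefficients as a polynomial in $q$.
   Context: ${n\brack m}=\prod_{i=0}^{m-1}\frac{1-q^{n-i}}{1-q^{m-i}}$ denotes the Gaussian polynomial ($q$-binomial coefficient) for integers $n\ge m\ge0$. *)

theory Defs
  imports "HOL-Computational_Algebra.Polynomial"
begin

text \<open>Gaussian polynomial [n brack m] = prod_{i=0}^{m-1} (1 - q^(n-i)) / (1 - q^(m-i)),
  taken as exact polynomial division in int poly (the denominator divides the numerator).\<close>
definition gauss_binom :: "nat \<Rightarrow> nat \<Rightarrow> int poly" where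
  "gauss_binom n m =
     (\<Prod>i<m. 1 - monom 1 (n - i)) div (\<Prod>i<m. 1 - monom 1 (m - i))"

end

theory Submission
  imports Defs
begin

abbreviation Xp :: "nat \<Rightarrow> int poly" where "Xp k \<equiv> monom 1 k"

lemma Xp_add: "Xp (a + b) = Xp a * Xp b"
  by (simp add: mult_monom)

fun g :: "nat \<Rightarrow> nat \<Rightarrow> int poly" where
  "g 0 k = (if k = 0 then 1 else 0)"
| "g (Suc n) 0 = 1"
| "g (Suc n) (Suc k) = g n k + Xp (Suc k) * g n (Suc k)"

lemma g_zero [simp]: "g n 0 = 1"
  by (cases n) auto

lemma g_big: "n < k \<Longrightarrow> g n k = 0"
proof (induction n arbitrary: k)
  case 0 then show ?case by simp
next
  case (Suc n) then obtain k' where "k = Suc k'" by (cases k) auto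
  with Suc show ?case by simp
qed

definition P :: "nat \<Rightarrow> nat \<Rightarrow> int poly" where
  "P n k = (\<Prod>i<k. 1 - Xp (n - i))"
definition D :: "nat \<Rightarrow> int poly" where
  "D k = (\<Prod>i<k. 1 - Xp (k - i))"

lemma D_Suc: "D (Suc k) = D k * (1 - Xp (Suc k))"
  unfolding D_def by (subst prod.lessThan_Suc_shift) (simp add: mult.commute)

lemma P_Suc_Suc: "P (Suc n) (Suc k) = (1 - Xp (Suc n)) * P n k"
  unfolding P_def by (subst prod.lessThan_Suc_shift) simp

lemma P_Suc: "P n (Suc k) = P n k * (1 - Xp (n - k))"
  unfolding P_def by simp

lemma Xp_eq_1: "Xp j = 1 \<longleftrightarrow> j = 0"
proof
  assume "Xp j = 1"
  then have "coeff (Xp j) 0 = coeff 1 0" by simp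
  then show "j = 0" by (auto split: if_splits)
qed (simp add: monom_0 one_pCons)

lemma P_big: "n < k \<Longrightarrow> P n k = 0"
  unfolding P_def by (rule prod_zero) (auto simp: Xp_eq_1 intro!: bexI[of _ n])

lemma one_minus_Xp_nz: "j > 0 \<Longrightarrow> 1 - Xp j \<noteq> 0"
proof
  assume "j > 0" "1 - Xp j = 0"
  then have "coeff (1 - Xp j) 0 = 0" by simp
  with \<open>j > 0\<close> show False by simp
qed

lemma D_nz: "D k \<noteq> 0"
  unfolding D_def by (subst prod_zero_iff) (auto simp: Xp_eq_1)

lemma g_D: "g n k * D k = P n k"
proof (induction n arbitrary: k)
  case 0 then show ?case
    by (cases k) (auto simp: D_def P_def intro: P_big[unfolded P_def])
next
  case (Suc n)
  show ?case
  proof (cases k)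
    case 0 then show ?thesis by (simp add: D_def P_def)
  next
    case (Suc k')
    have "g (Suc n) (Suc k') * D (Suc k') =
        (g n k' * D k') * (1 - Xp (Suc k')) + Xp (Suc k') * (g n (Suc k') * D (Suc k'))"
      by (simp add: D_Suc algebra_simps)
    also have "\<dots> = P n k' * (1 - Xp (Suc k')) + Xp (Suc k') * P n (Suc k')"
      using Suc.IH by simp
    also have "\<dots> = P (Suc n) (Suc k')"
    proof (cases "k' \<le> n")
      case True
      then have e: "Xp (Suc k') * Xp (n - k') = Xp (Suc n)"
        by (simp add: mult_monom)
      show ?thesis
        by (simp add: P_Suc[of n k'] P_Suc_Suc algebra_simps e[symmetric])
    next
      case False
      then show ?thesis by (simp add: P_big)
    qed
    finally show ?thesis using Suc by simp
  qed
qed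

lemma gauss_binom_g: "gauss_binom n k = g n k"
proof -
  have "gauss_binom n k = P n k div D k"
    unfolding gauss_binom_def P_def D_def by simp
  also have "\<dots> = g n k" using D_nz by (simp flip: g_D)
  finally show ?thesis .
qed

lemma g_pascal2: "k \<le> n \<Longrightarrow> g (Suc n) (Suc k) = Xp (n - k) * g n k + g n (Suc k)"
proof -
  assume kn: "k \<le> n"
  have "g (Suc n) (Suc k) * D (Suc k) = (Xp (n - k) * g n k + g n (Suc k)) * D (Suc k)"
  proof -
    have e: "Xp (n - k) * Xp (Suc k) = Xp (Suc n)" using kn by (simp add: mult_monom)
    have "(Xp (n - k) * g n k + g n (Suc k)) * D (Suc k)
        = Xp (n - k) * (g n k * D k) * (1 - Xp (Suc k)) + g n (Suc k) * D (Suc k)"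
      by (simp add: D_Suc algebra_simps)
    also have "\<dots> = Xp (n - k) * P n k * (1 - Xp (Suc k)) + P n k * (1 - Xp (n - k))"
      by (simp add: g_D P_Suc)
    also have "\<dots> = P n k * (1 - Xp (n - k) * Xp (Suc k))"
      by (simp add: algebra_simps)
    also have "\<dots> = P (Suc n) (Suc k)" using e by (simp add: P_Suc_Suc mult.commute)
    finally show ?thesis by (metis g_D)
  qed
  then show ?thesis using D_nz by simp
qed

definition nn :: "int poly \<Rightarrow> bool" where "nn p \<longleftrightarrow> (\<forall>i. coeff p i \<ge> 0)"

lemma nn_add: "nn p \<Longrightarrow> nn q \<Longrightarrow> nn (p + q)"
  unfolding nn_def by simp

lemma nn_mult: "nn p \<Longrightarrow> nn q \<Longrightarrow> nn (p * q)"
  unfolding nn_def coeff_mult by (auto intro!: sum_nonneg)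

lemma nn_Xp: "nn (Xp k)"
  unfolding nn_def by simp

lemma nn_0: "nn 0" and nn_1: "nn 1"
  unfolding nn_def by (auto simp: coeff_1)

lemma nn_g: "nn (g n k)"
  by (induction n k rule: g.induct) (auto intro: nn_add nn_mult nn_Xp nn_0 nn_1)

definition gm :: "nat \<Rightarrow> nat \<Rightarrow> int poly" where
  "gm n a = (case a of 0 \<Rightarrow> 0 | Suc a' \<Rightarrow> g n a')"

lemma gm_0 [simp]: "gm n 0 = 0" and gm_Suc [simp]: "gm n (Suc a) = g n a"
  by (simp_all add: gm_def)

lemma nn_gm: "nn (gm n a)"
  by (cases a) (simp_all add: nn_g nn_0)

lemma gm_pascal: "g (Suc n) a = gm n a + Xp a * g n a"
  by (cases a) (simp_all add: monom_0 one_pCons)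

lemma gm_pascal2: "a \<le> Suc n \<Longrightarrow> g (Suc n) a = Xp (Suc n - a) * gm n a + g n a"
proof (cases a)
  case (Suc a')
  assume "a \<le> Suc n"
  then have "a' \<le> n" using Suc by simp
  from g_pascal2[OF this] show ?thesis using Suc by (simp only: gm_Suc diff_Suc_Suc)
qed simp

definition G :: "nat \<Rightarrow> nat \<Rightarrow> nat \<Rightarrow> nat \<Rightarrow> nat \<Rightarrow> int poly" where
  "G M N a b r = g M a * g N b - Xp r * gm M a * g N (b + 1)"

lemma R1: "G M (Suc N) a (Suc b) r = Xp (Suc b) * G M N a (Suc b) (r + 1) + G M N a b r"
proof -
  have e1: "Xp (Suc (Suc b)) = Xp (Suc b) * Xp 1" and e2: "Xp (Suc r) = Xp r * Xp 1"
    by (simp_all add: mult_monom)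
  show ?thesis unfolding G_def by (simp add: e1 e2 algebra_simps)
qed

lemma R2: "Suc b \<le> N \<Longrightarrow>
  G M (Suc N) a (Suc b) (Suc r) = G M N a (Suc b) (Suc r) + Xp (N - b) * G M N a b r"
proof -
  assume h: "Suc b \<le> N"
  obtain c where c: "N - b = Suc c" "N - Suc b = c" using h
    by (metis Suc_diff_Suc Suc_le_lessD diff_Suc_Suc)
  have e1: "Xp (Suc c) = Xp c * Xp 1" and e2: "Xp (Suc r) = Xp r * Xp 1"
    by (simp_all add: mult_monom)
  have p1: "g (Suc N) (Suc b) = Xp (Suc c) * g N b + g N (Suc b)"
    using g_pascal2[of b N] h c by simp
  have p2: "g (Suc N) (Suc (Suc b)) = Xp c * g N (Suc b) + g N (Suc (Suc b))"
    using g_pascal2[of "Suc b" N] h c by simp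
  show ?thesis unfolding G_def
    by (simp only: c Suc_eq_plus1[symmetric] p1 p2 e1 e2) (simp add: algebra_simps)
qed

lemma R3: "G (Suc M) N (Suc a) b (Suc r) = G M N a b (Suc r) + Xp (Suc a) * G M N (Suc a) b r"
proof -
  have e1: "Xp (Suc a) = Xp a * Xp 1" and e2: "Xp (Suc r) = Xp r * Xp 1"
    by (simp_all add: mult_monom)
  have p: "g (Suc M) a = gm M a + Xp a * g M a" by (rule gm_pascal)
  show ?thesis unfolding G_def gm_Suc
    by (simp only: p g.simps(3) e1 e2) (simp add: algebra_simps)
qed

lemma R4: "a \<le> M \<Longrightarrow>
  G (Suc M) N (Suc a) b r = Xp (M - a) * G M N a b (Suc r) + G M N (Suc a) b r"
proof -
  assume h: "a \<le> M"
  have e1: "Xp (Suc M - a) = Xp (M - a) * Xp 1" and e2: "Xp (Suc r) = Xp r * Xp 1"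
    using h by (simp_all add: mult_monom Suc_diff_le)
  have p1: "g (Suc M) (Suc a) = Xp (M - a) * g M a + g M (Suc a)"
    using g_pascal2[OF h] .
  have p2: "g (Suc M) a = Xp (Suc M - a) * gm M a + g M a"
    using gm_pascal2[of a M] h by simp
  show ?thesis unfolding G_def gm_Suc
    by (simp only: p1 p2 e1 e2) (simp add: algebra_simps)
qed

lemma nn_comb: "nn x \<Longrightarrow> nn y \<Longrightarrow> nn (Xp k * x + y)"
  by (intro nn_add nn_mult nn_Xp)

lemma main:
  "a \<le> b + 1 \<Longrightarrow> b \<le> N \<Longrightarrow> a \<le> M + 1 \<Longrightarrow> N + a \<le> M + b + 1
   \<Longrightarrow> r + N + 2 * a \<le> M + 2 * b + 2 \<Longrightarrow> nn (G M N a b r)"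
proof (induction "M + N" arbitrary: M N a b r rule: less_induct)
  case less
  show ?case
  proof (cases "a = 0")
    case True then show ?thesis by (simp add: G_def nn_mult nn_g)
  next
    case a0: False
    show ?thesis
    proof (cases "b = N")
      case True
      then have "g N (b + 1) = 0" by (simp add: g_big)
      then show ?thesis by (simp add: G_def nn_mult nn_g)
    next
      case bN: False
      show ?thesis
      proof (cases "a \<le> b")
        case ab: True
        obtain N' b' where NN: "N = Suc N'" and bb: "b = Suc b'"
          using a0 ab bN less.prems(2) by (cases N; cases b) auto
        show ?thesis
        proof (cases r)
          case 0
          have "nn (G M N' a (Suc b') (r + 1))"
            using less.prems ab bN NN bb 0 by (intro less.hyps) auto
          moreover have "nn (G M N' a b' r)"
            using less.prems ab bN NN bb 0 by (intro less.hyps) auto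
          ultimately show ?thesis unfolding NN bb R1 by (rule nn_comb)
        next
          case (Suc r')
          have "nn (G M N' a (Suc b') r)"
            using less.prems ab bN NN bb Suc by (intro less.hyps) auto
          moreover have "nn (G M N' a b' r')"
            using less.prems ab bN NN bb Suc by (intro less.hyps) auto
          moreover have "Suc b' \<le> N'" using bN less.prems NN bb by auto
          ultimately show ?thesis unfolding NN bb Suc
            by (subst R2) (assumption, rule nn_add, assumption, rule nn_mult[OF nn_Xp], assumption)
        qed
      next
        case False
        then have ab: "a = b + 1" using less.prems by simp
        show ?thesis
        proof (cases "M = N")
          case True
          then have "r = 0" using less.prems ab by simp
          then have "G M N a b r = 0" using True ab by (simp add: G_def mult.commute)
          then show ?thesis by (simp add: nn_0)
        next
          case MN: False
          have "M \<noteq> 0" using less.prems ab MN by auto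
          then obtain M' where MM: "M = Suc M'" using not0_implies_Suc by blast
          obtain a' where aa: "a = Suc a'" using ab by simp
          show ?thesis
          proof (cases r)
            case 0
            have "nn (G M' N a' b (Suc r))"
              using less.prems ab MN MM aa 0 by (intro less.hyps) auto
            moreover have "nn (G M' N (Suc a') b r)"
              using less.prems ab MN MM aa 0 by (intro less.hyps) auto
            moreover have "a' \<le> M'" using less.prems ab MN MM aa by auto
            ultimately show ?thesis unfolding MM aa
              by (subst R4) (auto intro: nn_comb)
          next
            case (Suc r')
            have "nn (G M' N a' b r)"
              using less.prems ab MN MM aa Suc by (intro less.hyps) auto
            moreover have "nn (G M' N (Suc a') b r')"
              using less.prems ab MN MM aa Suc by (intro less.hyps) auto
            ultimately show ?thesis unfolding MM aa Suc
              by (subst R3) (rule nn_add, assumption, rule nn_mult[OF nn_Xp], assumption)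
          qed
        qed
      qed
    qed
  qed
qed

theorem lemma3p2:
  fixes M N m l r :: nat
  assumes "1 \<le> m" and "m \<le> l" and "l < N"
    and "int M - int m \<ge> int N - int l" and "int N - int l \<ge> 1"
    and "int r \<le> int M - int N + 2 * int l - 2 * int m + 2"
  shows "\<forall>i. coeff (gauss_binom M m * gauss_binom N l
                 - monom 1 r * gauss_binom M (m - 1) * gauss_binom N (l + 1)) i \<ge> 0"
proof -
  have "nn (G M N m l r)" using assms by (intro main) auto
  moreover have "gm M m = g M (m - 1)" using assms(1) by (cases m) auto
  ultimately show ?thesis by (simp add: G_def nn_def gauss_binom_g)
qed

end
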